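(* Let $(\mathfrak{g},[\cdot,\ldots,\cdot],\varepsilon,\alpha)$ be an $n$-Hom-Lie color algebra. Then $\mathfrak{g}$ admits a strict product structure if and only if $\mathfrak{g}$ admits a decomposition $\mathfrak{g}=\mathfrak{g}_+\oplus\mathfrak{g}_-$ into two nonzero $\Gamma$-graded subalgebras $\mathfrak{g}_+,\mathfrak{g}_-$ such that for every $1\le i\le n-1$, $[a_1,\ldots,a_i,b_{i+1},\ldots,b_n]=0$ for all $a_1,\ldots,a_i\in\mathfrak{g}_+$ and $b_{i+1},\ldots,b_n\in\mathfrak{g}_-$.
   Context: $\mathbb{K}$ is a field of characteristic zero and $\Gamma$ an abelian group. A bicharacter is a map $\varepsilon:\Gamma\times\Gamma\to\mathbb{K}\setminus\{0\}$ with $\varepsilon(a,b)\varepsilon(b,a)=1$, $\varepsilon(a,b+c)=\varepsilon(a,b)\varepsilon(a,c)$, $\varepsilon(a+b,c)=\varepsilon(a,c)\varepsilon(b,c)$. For homogeneous $x,y$, $\varepsilon(x,y)=\varepsilon(|x|,|y|)$ and $\varepsilon(x,y_1+\dots+y_k)=\varepsilon(|x|,|y_1|+\dots+|y_k|)$ ($=1$ for an empty sum). An $n$-Hom-Lie color algebra $(\mathfrak{g},[\cdot,\ldots,\cdot],\varepsilon,\alpha)$ is a $\Gamma$-graded vector space with an $n$-linear bracket of degree zero, a bicharacter $\varepsilon$ and a degree-zero linear map $\alpha$ such that for homogeneous elements: (i) $[x_1,\ldots,x_i,x_{i+1},\ldots,x_n]=-\varepsilon(x_i,x_{i+1})[x_1,\ldots,x_{i+1},x_i,\ldots,x_n]$;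 (ii) $[\alpha(x_1),\ldots,\alpha(x_{n-1}),[y_1,\ldots,y_n]]=\sum_{i=1}^n\varepsilon(x_1+\dots+x_{n-1},y_1+\dots+y_{i-1})[\alpha(y_1),\ldots,\alpha(y_{i-1}),[x_1,\ldots,x_{n-1},y_i],\alpha(y_{i+1}),\ldots,\alpha(y_n)]$. A $\Gamma$-graded subalgebra is a graded subspace $\mathfrak{h}=\bigoplus_\gamma(\mathfrak{h}\cap\mathfrak{g}_\gamma)$ with $\alpha(\mathfrak{h})\subseteq\mathfrak{h}$ and $[\mathfrak{h},\ldots,\mathfrak{h}]\subseteq\mathfrak{h}$. An almost product structure is a degree-zero linear map $\mathcal{P}:\mathfrak{g}\to\mathfrak{g}$ with $\mathcal{P}\neq\pm\mathrm{id}$ and $\mathcal{P}^2=\mathrm{id}$. A degree-zero linear map $\Theta$ is in the centroid if $\Theta\alpha=\alpha\Theta$ and $\Theta([x_1,x_2,\ldots,x_n])=[\Theta x_1,x_2,\ldots,x_n]$ for all $x_i$. A strict product structure is an almost product structure lying in the centroid. *)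

theory Defs
  imports Complex_Main
begin

definition bicharacter :: "('g::ab_group_add \<Rightarrow> 'g \<Rightarrow> 'k::field) \<Rightarrow> bool" where
  "bicharacter eps \<longleftrightarrow>
     (\<forall>a b. eps a b \<noteq> 0) \<and>
     (\<forall>a b. eps a b * eps b a = 1) \<and>
     (\<forall>a b c. eps a (b + c) = eps a b * eps a c) \<and>
     (\<forall>a b c. eps (a + b) c = eps a c * eps b c)"

definition graded_space ::
  "('k::field \<Rightarrow> 'v::ab_group_add \<Rightarrow> 'v) \<Rightarrow> ('g \<Rightarrow> 'v set) \<Rightarrow> bool" where
  "graded_space scale G \<longleftrightarrow>
     vector_space scale \<and>
     (\<forall>a. module.subspace scale (G a)) \<and>
     (\<forall>v. \<exists>f. finite {a. f a \<noteq> 0} \<and> (\<forall>a. f a \<in> G a) \<and> v = (\<Sum>a\<in>{a. f a \<noteq> 0}. f a)) \<and>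
     (\<forall>f. finite {a. f a \<noteq> 0} \<and> (\<forall>a. f a \<in> G a) \<and> (\<Sum>a\<in>{a. f a \<noteq> 0}. f a) = 0
          \<longrightarrow> (\<forall>a. f a = 0))"

definition deg0_linear ::
  "('k::field \<Rightarrow> 'v::ab_group_add \<Rightarrow> 'v) \<Rightarrow> ('g \<Rightarrow> 'v set) \<Rightarrow> ('v \<Rightarrow> 'v) \<Rightarrow> bool" where
  "deg0_linear scale G f \<longleftrightarrow> Vector_Spaces.linear scale scale f \<and> (\<forall>a. f ` G a \<subseteq> G a)"

text \<open>The n-ary bracket is modelled as a function on lists; only lists of length n matter.
  The i-th argument (0-based) of the list \<open>xs\<close> is \<open>xs ! i\<close>.\<close>
definition n_Hom_Lie_color_algebra ::
  "('k::field_char_0 \<Rightarrow> 'v::ab_group_add \<Rightarrow> 'v) \<Rightarrow> ('g::ab_group_add \<Rightarrow> 'v set) \<Rightarrow> nat \<Rightarrow>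
   ('v list \<Rightarrow> 'v) \<Rightarrow> ('g \<Rightarrow> 'g \<Rightarrow> 'k) \<Rightarrow> ('v \<Rightarrow> 'v) \<Rightarrow> bool" where
  "n_Hom_Lie_color_algebra scale G n br eps \<alpha> \<longleftrightarrow>
     graded_space scale G \<and>
     bicharacter eps \<and>
     deg0_linear scale G \<alpha> \<and>
     \<comment> \<open>n-linearity of the bracket\<close>
     (\<forall>xs i x y c. length xs = n \<and> i < n \<longrightarrow>
        br (xs[i := x + y]) = br (xs[i := x]) + br (xs[i := y]) \<and>
        br (xs[i := scale c x]) = scale c (br (xs[i := x]))) \<and>
     \<comment> \<open>the bracket has degree zero\<close>
     (\<forall>xs ds. length xs = n \<and> length ds = n \<and> (\<forall>j<n. xs ! j \<in> G (ds ! j))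
        \<longrightarrow> br xs \<in> G (sum_list ds)) \<and>
     \<comment> \<open>(i) \<open>\<epsilon>\<close>-skew-symmetry for homogeneous elements\<close>
     (\<forall>xs ds i. length xs = n \<and> length ds = n \<and> (\<forall>j<n. xs ! j \<in> G (ds ! j)) \<and> i + 1 < n
        \<longrightarrow> br xs = - scale (eps (ds ! i) (ds ! (i + 1)))
                        (br (xs[i := xs ! (i + 1), i + 1 := xs ! i]))) \<and>
     \<comment> \<open>(ii) Hom-Filippov-Jacobi identity for homogeneous elements\<close>
     (\<forall>xs dx ys dy. length xs = n - 1 \<and> length dx = n - 1 \<and> (\<forall>j<n - 1. xs ! j \<in> G (dx ! j)) \<and>
        length ys = n \<and> length dy = n \<and> (\<forall>j<n. ys ! j \<in> G (dy ! j)) \<longrightarrow>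
        br (map \<alpha> xs @ [br ys]) =
          (\<Sum>i<n. scale (eps (sum_list dx) (sum_list (take i dy)))
                    (br (map \<alpha> (take i ys) @ [br (xs @ [ys ! i])] @ map \<alpha> (drop (i + 1) ys)))))"

definition almost_product_structure ::
  "('k::field \<Rightarrow> 'v::ab_group_add \<Rightarrow> 'v) \<Rightarrow> ('g \<Rightarrow> 'v set) \<Rightarrow> ('v \<Rightarrow> 'v) \<Rightarrow> bool" where
  "almost_product_structure scale G P \<longleftrightarrow>
     deg0_linear scale G P \<and> P \<noteq> id \<and> P \<noteq> (\<lambda>x. - x) \<and> P \<circ> P = id"

definition centroid ::
  "('k::field \<Rightarrow> 'v::ab_group_add \<Rightarrow> 'v) \<Rightarrow> ('g \<Rightarrow> 'v set) \<Rightarrow> nat \<Rightarrow> ('v list \<Rightarrow> 'v) \<Rightarrow>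
   ('v \<Rightarrow> 'v) \<Rightarrow> ('v \<Rightarrow> 'v) \<Rightarrow> bool" where
  "centroid scale G n br \<alpha> \<Theta> \<longleftrightarrow>
     deg0_linear scale G \<Theta> \<and> \<Theta> \<circ> \<alpha> = \<alpha> \<circ> \<Theta> \<and>
     (\<forall>xs. length xs = n \<longrightarrow> \<Theta> (br xs) = br (xs[0 := \<Theta> (xs ! 0)]))"

definition strict_product_structure ::
  "('k::field \<Rightarrow> 'v::ab_group_add \<Rightarrow> 'v) \<Rightarrow> ('g \<Rightarrow> 'v set) \<Rightarrow> nat \<Rightarrow> ('v list \<Rightarrow> 'v) \<Rightarrow>
   ('v \<Rightarrow> 'v) \<Rightarrow> ('v \<Rightarrow> 'v) \<Rightarrow> bool" where
  "strict_product_structure scale G n br \<alpha> P \<longleftrightarrow>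
     almost_product_structure scale G P \<and> centroid scale G n br \<alpha> P"

definition graded_subalgebra ::
  "('k::field \<Rightarrow> 'v::ab_group_add \<Rightarrow> 'v) \<Rightarrow> ('g \<Rightarrow> 'v set) \<Rightarrow> nat \<Rightarrow> ('v list \<Rightarrow> 'v) \<Rightarrow>
   ('v \<Rightarrow> 'v) \<Rightarrow> 'v set \<Rightarrow> bool" where
  "graded_subalgebra scale G n br \<alpha> h \<longleftrightarrow>
     module.subspace scale h \<and>
     (\<forall>v\<in>h. \<exists>f. finite {a. f a \<noteq> 0} \<and> (\<forall>a. f a \<in> h \<inter> G a) \<and> v = (\<Sum>a\<in>{a. f a \<noteq> 0}. f a)) \<and>
     \<alpha> ` h \<subseteq> h \<and>
     (\<forall>xs. length xs = n \<and> set xs \<subseteq> h \<longrightarrow> br xs \<in> h)"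

end

theory Submission
  imports Defs
begin


lemma supp_sum:
  fixes f :: "'a \<Rightarrow> 'b::comm_monoid_add"
  assumes "finite U" "{a. f a \<noteq> 0} \<subseteq> U"
  shows "sum f {a. f a \<noteq> 0} = sum f U"
  by (rule sum.mono_neutral_left) (use assms in auto)

lemma multi_ext:
  fixes F :: "'v::ab_group_add list \<Rightarrow> 'w::ab_group_add"
  assumes add: "\<And>xs i x y. length xs = n \<Longrightarrow> i < n \<Longrightarrow> F (xs[i:=x+y]) = F (xs[i:=x]) + F (xs[i:=y])"
  and span: "\<And>j v. j < n \<Longrightarrow> R j v \<Longrightarrow> \<exists>S f. finite S \<and> (\<forall>s\<in>S. Q j (f s)) \<and> v = sum f (S::'i set)"
  and van: "\<And>xs. length xs = n \<Longrightarrow> (\<forall>j<n. Q j (xs!j)) \<Longrightarrow> F xs = 0"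
  and xs: "length xs = n" "\<forall>j<n. R j (xs!j)"
  shows "F xs = 0"
proof -
  have zero: "F (xs[i:=0]) = 0" if "length xs = n" "i < n" for xs i
  proof -
    have h: "F (xs[i:=0+0]) = F (xs[i:=0]) + F (xs[i:=0])" by (rule add[OF that])
    then have "F (xs[i:=0]) + 0 = F (xs[i:=0]) + F (xs[i:=0])" by (simp only: add_0_right)
    then show ?thesis by (metis add_left_cancel)
  qed
  have main: "\<forall>xs. length xs = n \<longrightarrow> (\<forall>j<k. R j (xs!j)) \<longrightarrow> (\<forall>j. k \<le> j \<and> j < n \<longrightarrow> Q j (xs!j)) \<longrightarrow> F xs = 0"
    if "k \<le> n" for k
    using that
  proof (induction k)
    case 0 then show ?case using van by simp
  next
    case (Suc k)
    show ?case
    proof (intro allI impI)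
      fix xs assume l: "length xs = n" and r: "\<forall>j<Suc k. R j (xs!j)" and q: "\<forall>j. Suc k \<le> j \<and> j < n \<longrightarrow> Q j (xs!j)"
      have kn: "k < n" using Suc by simp
      obtain S :: "'i set" and f where S: "finite S" "\<forall>s\<in>S. Q k (f s)" "xs!k = sum f S"
      proof -
        have "R k (xs!k)" using r by simp
        from span[OF kn this] show ?thesis using that by blast
      qed
      have T: "T \<subseteq> S \<longrightarrow> F (xs[k := sum f T]) = 0" if "finite T" for T
        using that
      proof (induction T rule: finite_induct)
        case empty then show ?case using zero l kn by simp
      next
        case (insert s T)
        show ?case
        proof
          assume sub: "insert s T \<subseteq> S"
          have 1: "F (xs[k := f s]) = 0"
          proof -
            have IH: "\<forall>xs. length xs = n \<longrightarrow> (\<forall>j<k. R j (xs!j)) \<longrightarrow> (\<forall>j. k \<le> j \<and> j < n \<longrightarrow> Q j (xs!j)) \<longrightarrow> F xs = 0"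
              using Suc.IH kn by simp
            have A: "length (xs[k := f s]) = n" using l by simp
            have B: "\<forall>j<k. R j (xs[k := f s] ! j)" using r by simp
            have C: "\<forall>j. k \<le> j \<and> j < n \<longrightarrow> Q j (xs[k := f s] ! j)"
            proof (intro allI impI)
              fix j assume j: "k \<le> j \<and> j < n"
              show "Q j (xs[k := f s] ! j)"
              proof (cases "j = k")
                case True then show ?thesis using S(2) sub l j by simp
              next
                case False then show ?thesis using q j by simp
              qed
            qed
            show ?thesis using IH A B C by blast
          qed
          have "F (xs[k := sum f (insert s T)]) = F (xs[k := f s]) + F (xs[k := sum f T])"
            using insert.hyps add[OF l kn, of "f s" "sum f T"] by (simp add: sum.insert del: list_update_overwrite)
          then show "F (xs[k := sum f (insert s T)]) = 0" using 1 insert.IH sub by simp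
        qed
      qed
      have "xs[k := sum f S] = xs" using S(3) by (metis list_update_id)
      then show "F xs = 0" using T[OF S(1)] by (metis order_refl)
    qed
  qed
  show ?thesis using main[of n] xs by auto
qed




locale hlc =
  fixes scale :: "'k::field_char_0 \<Rightarrow> 'v::ab_group_add \<Rightarrow> 'v"
    and G :: "'g::ab_group_add \<Rightarrow> 'v set"
    and n :: nat
    and br :: "'v list \<Rightarrow> 'v"
    and eps :: "'g \<Rightarrow> 'g \<Rightarrow> 'k"
    and \<alpha> :: "'v \<Rightarrow> 'v"
  assumes n2: "n \<ge> 2"
    and alg: "n_Hom_Lie_color_algebra scale G n br eps \<alpha>"
begin

lemma VS: "vector_space scale"
  using alg unfolding n_Hom_Lie_color_algebra_def graded_space_def by blast

sublocale V: vector_space scale by (rule VS)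

lemma GS: "V.subspace (G a)"
  using alg unfolding n_Hom_Lie_color_algebra_def graded_space_def by blast

lemma span: "\<exists>f. finite {a. f a \<noteq> 0} \<and> (\<forall>a. f a \<in> G a) \<and> v = (\<Sum>a\<in>{a. f a \<noteq> 0}. f a)"
  using alg unfolding n_Hom_Lie_color_algebra_def graded_space_def by blast

lemma uniq0: "finite {a. f a \<noteq> 0} \<Longrightarrow> (\<forall>a. f a \<in> G a) \<Longrightarrow> (\<Sum>a\<in>{a. f a \<noteq> 0}. f a) = 0 \<Longrightarrow> f a = 0"
  using alg unfolding n_Hom_Lie_color_algebra_def graded_space_def by blast

lemma br_add: "length xs = n \<Longrightarrow> i < n \<Longrightarrow> br (xs[i := x + y]) = br (xs[i := x]) + br (xs[i := y])"
  using alg unfolding n_Hom_Lie_color_algebra_def by blast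

lemma br_scale: "length xs = n \<Longrightarrow> i < n \<Longrightarrow> br (xs[i := scale c x]) = scale c (br (xs[i := x]))"
  using alg unfolding n_Hom_Lie_color_algebra_def by blast

lemma skew: "length xs = n \<Longrightarrow> length ds = n \<Longrightarrow> (\<forall>j<n. xs ! j \<in> G (ds ! j)) \<Longrightarrow> i + 1 < n \<Longrightarrow>
   br xs = - scale (eps (ds ! i) (ds ! (i + 1))) (br (xs[i := xs ! (i + 1), i + 1 := xs ! i]))"
  using alg unfolding n_Hom_Lie_color_algebra_def by blast

lemma alpha_lin: "Vector_Spaces.linear scale scale \<alpha>"
  using alg unfolding n_Hom_Lie_color_algebra_def deg0_linear_def by blast

lemma br_neg: "length xs = n \<Longrightarrow> i < n \<Longrightarrow> br (xs[i := - x]) = - br (xs[i := x])"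
  using br_scale[of xs i "-1" x] by simp

lemma br_zero: "length xs = n \<Longrightarrow> i < n \<Longrightarrow> br (xs[i := 0]) = 0"
  using br_scale[of xs i 0 0] by simp

lemma two_zero: "(x::'v) + x = 0 \<Longrightarrow> x = 0"
proof -
  assume h: "x + x = 0"
  have "x = scale (1/2 + 1/2) x" by simp
  also have "\<dots> = scale (1/2) (x + x)" by (simp only: V.scale_left_distrib V.scale_right_distrib)
  also have "\<dots> = 0" using h by simp
  finally show ?thesis .
qed

lemma half: "scale (1/2) (v + v) = (v::'v)"
proof -
  have "scale (1/2) (v + v) = scale (1/2 + 1/2) v" by (simp only: V.scale_left_distrib V.scale_right_distrib)
  also have "\<dots> = v" by simp
  finally show ?thesis .
qed

lemma uniq:
  assumes "finite {a. f a \<noteq> 0}" "finite {a. g a \<noteq> 0}" "\<forall>a. f a \<in> G a" "\<forall>a. g a \<in> G a"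
    "(\<Sum>a\<in>{a. f a \<noteq> 0}. f a) = (\<Sum>a\<in>{a. g a \<noteq> 0}. g a)"
  shows "f a = g a"
proof -
  let ?U = "{a. f a \<noteq> 0} \<union> {a. g a \<noteq> 0}"
  let ?d = "\<lambda>a. f a - g a"
  have fU: "finite ?U" using assms by simp
  have sd: "{a. ?d a \<noteq> 0} \<subseteq> ?U" by auto
  have fd: "finite {a. ?d a \<noteq> 0}" using finite_subset[OF sd fU] .
  have "(\<Sum>a\<in>{a. ?d a \<noteq> 0}. ?d a) = (\<Sum>a\<in>?U. ?d a)" by (rule supp_sum[OF fU sd])
  also have "\<dots> = (\<Sum>a\<in>?U. f a) - (\<Sum>a\<in>?U. g a)" by (simp add: sum_subtractf)
  also have "(\<Sum>a\<in>?U. f a) = (\<Sum>a\<in>{a. f a \<noteq> 0}. f a)" by (rule supp_sum[symmetric]) (use fU in auto)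
  also have "(\<Sum>a\<in>?U. g a) = (\<Sum>a\<in>{a. g a \<noteq> 0}. g a)" by (rule supp_sum[symmetric]) (use fU in auto)
  finally have "(\<Sum>a\<in>{a. ?d a \<noteq> 0}. ?d a) = 0" using assms(5) by simp
  moreover have "\<forall>a. ?d a \<in> G a" using assms(3,4) GS V.subspace_diff by blast
  ultimately have "?d a = 0" using uniq0[of ?d] fd by blast
  then show ?thesis by simp
qed

end



context hlc begin

lemma slot_hom:
  assumes Plin: "Vector_Spaces.linear scale scale P" and Pdeg: "\<forall>a. P ` G a \<subseteq> G a"
    and cen: "\<forall>xs. length xs = n \<longrightarrow> P (br xs) = br (xs[0 := P (xs ! 0)])"
  shows "j < n \<Longrightarrow> length xs = n \<Longrightarrow> length ds = n \<Longrightarrow> \<forall>i<n. xs!i \<in> G (ds!i) \<Longrightarrow>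
     P (br xs) = br (xs[j := P (xs!j)])"
proof (induction j arbitrary: xs ds)
  case 0 then show ?case using cen by simp
next
  case (Suc j)
  interpret L: Vector_Spaces.linear scale scale P by (rule Plin)
  let ?e = "eps (ds!j) (ds!(j+1))"
  let ?ys = "xs[j := xs!(j+1), j+1 := xs!j]"
  let ?es = "ds[j := ds!(j+1), j+1 := ds!j]"
  let ?zs = "xs[Suc j := P (xs!Suc j)]"
  have jn: "j + 1 < n" using Suc.prems by simp
  have hys: "\<forall>i<n. ?ys!i \<in> G (?es!i)" using Suc.prems jn by (auto simp: nth_list_update)
  have 1: "br xs = - scale ?e (br ?ys)" using skew[of xs ds j] Suc.prems jn by simp
  have 2: "P (br ?ys) = br (?ys[j := P (?ys!j)])" using Suc.IH[of ?ys ?es] Suc.prems jn hys by simp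
  have hzs: "\<forall>i<n. ?zs!i \<in> G (ds!i)"
  proof (intro allI impI)
    fix i assume i: "i < n"
    show "?zs!i \<in> G (ds!i)"
    proof (cases "i = Suc j")
      case True then show ?thesis using Suc.prems Pdeg jn by auto
    next
      case False then show ?thesis using Suc.prems i by simp
    qed
  qed
  have 3: "br ?zs = - scale ?e (br (?zs[j := ?zs!(j+1), j+1 := ?zs!j]))"
    using skew[of ?zs ds j] Suc.prems jn hzs by simp
  have 4: "?zs[j := ?zs!(j+1), j+1 := ?zs!j] = ?ys[j := P (?ys!j)]"
    using jn Suc.prems by (intro nth_equalityI) (auto simp: nth_list_update)
  have "P (br xs) = - scale ?e (P (br ?ys))" using 1 by (simp add: L.neg L.scale)
  also have "\<dots> = br ?zs" using 2 3 4 by simp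
  finally show ?case by simp
qed

lemma slot_all:
  assumes Plin: "Vector_Spaces.linear scale scale P" and Pdeg: "\<forall>a. P ` G a \<subseteq> G a"
    and cen: "\<forall>xs. length xs = n \<longrightarrow> P (br xs) = br (xs[0 := P (xs ! 0)])"
    and j: "j < n" and xs: "length xs = n"
  shows "P (br xs) = br (xs[j := P (xs!j)])"
proof -
  interpret L: Vector_Spaces.linear scale scale P by (rule Plin)
  let ?F = "\<lambda>xs. P (br xs) - br (xs[j := P (xs!j)])"
  have "?F xs = 0"
  proof (rule multi_ext[where F = ?F and n = n and R = "\<lambda>_ _. True" and Q = "\<lambda>_ v. \<exists>d. v \<in> G d" and 'i = 'g])
    fix xs :: "'v list" and i x y assume l: "length xs = n" and i: "i < n"
    show "?F (xs[i:=x+y]) = ?F (xs[i:=x]) + ?F (xs[i:=y])"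
    proof (cases "i = j")
      case True
      then show ?thesis using l i br_add[of xs j] br_add[of xs j "P x" "P y"]
        by (simp add: L.add algebra_simps)
    next
      case False
      have e: "\<And>z. xs[i := z, j := P (xs ! j)] = xs[j := P (xs ! j), i := z]"
        using False by (simp add: list_update_swap)
      show ?thesis using False l i br_add[of "xs[j := P (xs ! j)]" i x y] br_add[of xs i x y]
        by (simp add: e L.add algebra_simps)
    qed
  next
    fix k v assume "k < n" "True"
    obtain f where f: "finite {a. f a \<noteq> 0}" "\<forall>a. f a \<in> G a" "v = (\<Sum>a\<in>{a. f a \<noteq> 0}. f a)"
      using span by blast
    show "\<exists>S f. finite S \<and> (\<forall>s\<in>S. \<exists>d. f s \<in> G d) \<and> v = sum f (S::'g set)"
      by (rule exI[of _ "{a. f a \<noteq> 0}"], rule exI[of _ f]) (use f in blast)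
  next
    fix xs :: "'v list" assume l: "length xs = n" and q: "\<forall>j<n. \<exists>d. xs ! j \<in> G d"
    define ds where "ds = map (\<lambda>i. SOME d. xs!i \<in> G d) [0..<n]"
    have "\<forall>i<n. xs!i \<in> G (ds!i)"
    proof (intro allI impI)
      fix i assume i: "i < n"
      have "ds!i = (SOME d. xs!i \<in> G d)" unfolding ds_def using i by simp
      then show "xs!i \<in> G (ds!i)" using someI_ex[OF q[rule_format, OF i]] by simp
    qed
    moreover have "length ds = n" unfolding ds_def by simp
    ultimately have "P (br xs) = br (xs[j := P (xs!j)])" using slot_hom[OF Plin Pdeg cen j l] by blast
    then show "?F xs = 0" by simp
  qed (use xs in auto)
  then show ?thesis by simp
qed

end



context hlc begin

lemma decomp_inv:
  assumes Qlin: "Vector_Spaces.linear scale scale Q" and Qdeg: "\<forall>a. Q ` G a \<subseteq> G a" and v: "Q v = v"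
  shows "\<exists>f. finite {a. f a \<noteq> 0} \<and> (\<forall>a. f a \<in> {x. Q x = x} \<inter> G a) \<and> v = (\<Sum>a\<in>{a. f a \<noteq> 0}. f a)"
proof -
  interpret L: Vector_Spaces.linear scale scale Q by (rule Qlin)
  obtain f where f: "finite {a. f a \<noteq> 0}" "\<forall>a. f a \<in> G a" "v = (\<Sum>a\<in>{a. f a \<noteq> 0}. f a)"
    using span by blast
  let ?g = "\<lambda>a. Q (f a)"
  have sg: "{a. ?g a \<noteq> 0} \<subseteq> {a. f a \<noteq> 0}" by auto
  have fg: "finite {a. ?g a \<noteq> 0}" using finite_subset[OF sg f(1)] .
  have gG: "\<forall>a. ?g a \<in> G a" using f(2) Qdeg by blast
  have "(\<Sum>a\<in>{a. ?g a \<noteq> 0}. ?g a) = (\<Sum>a\<in>{a. f a \<noteq> 0}. ?g a)" by (rule supp_sum[OF f(1) sg])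
  also have "\<dots> = Q v" using f(3) by (simp add: L.sum)
  finally have "(\<Sum>a\<in>{a. ?g a \<noteq> 0}. ?g a) = (\<Sum>a\<in>{a. f a \<noteq> 0}. f a)" using v f(3) by simp
  then have "\<forall>a. ?g a = f a" using uniq[OF fg f(1) gG f(2)] by blast
  then show ?thesis using f by blast
qed

lemma fwd:
  assumes sp: "strict_product_structure scale G n br \<alpha> P"
  shows "\<exists>gp gm. graded_subalgebra scale G n br \<alpha> gp \<and> graded_subalgebra scale G n br \<alpha> gm \<and>
                  gp \<noteq> {0} \<and> gm \<noteq> {0} \<and>
                  gp \<inter> gm = {0} \<and> (\<forall>v. \<exists>a\<in>gp. \<exists>b\<in>gm. v = a + b) \<and>
                  (\<forall>i. 1 \<le> i \<and> i \<le> n - 1 \<longrightarrow>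
                     (\<forall>as bs. length as = i \<and> set as \<subseteq> gp \<and> length bs = n - i \<and> set bs \<subseteq> gm
                        \<longrightarrow> br (as @ bs) = 0))"
proof -
  have Plin: "Vector_Spaces.linear scale scale P" and Pdeg: "\<forall>a. P ` G a \<subseteq> G a"
    and Pid: "P \<noteq> id" and Pneg: "P \<noteq> (\<lambda>x. - x)" and PP: "P \<circ> P = id" and Pa: "P \<circ> \<alpha> = \<alpha> \<circ> P"
    and cen: "\<forall>xs. length xs = n \<longrightarrow> P (br xs) = br (xs[0 := P (xs ! 0)])"
    using sp unfolding strict_product_structure_def almost_product_structure_def centroid_def deg0_linear_def
    by blast+
  interpret L: Vector_Spaces.linear scale scale P by (rule Plin)
  interpret LA: Vector_Spaces.linear scale scale \<alpha> by (rule alpha_lin)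
  have slot: "\<And>xs j. j < n \<Longrightarrow> length xs = n \<Longrightarrow> P (br xs) = br (xs[j := P (xs!j)])"
    using slot_all[OF Plin Pdeg cen] by blast
  have PPx: "\<And>x. P (P x) = x" using PP by (metis comp_apply id_apply)
  have Pax: "\<And>x. P (\<alpha> x) = \<alpha> (P x)" using Pa by (metis comp_apply)
  define gp where "gp = {x. P x = x}"
  define gm where "gm = {x. P x = - x}"
  have Nlin: "Vector_Spaces.linear scale scale (\<lambda>x. - P x)"
    unfolding Vector_Spaces.linear_iff using VS by (simp add: L.add L.scale)
  have Ndeg: "\<forall>a. (\<lambda>x. - P x) ` G a \<subseteq> G a" using Pdeg GS V.subspace_neg by blast
  have n0: "0 < n" using n2 by simp
  have sub_gp: "V.subspace gp" unfolding V.subspace_def gp_def by (simp add: L.add L.scale)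
  have sub_gm: "V.subspace gm" unfolding V.subspace_def gm_def by (simp add: L.add L.scale)
  have sa_gp: "graded_subalgebra scale G n br \<alpha> gp"
    unfolding graded_subalgebra_def
  proof (intro conjI ballI subsetI allI impI)
    show "V.subspace gp" by (rule sub_gp)
  next
    fix v assume "v \<in> gp"
    then show "\<exists>f. finite {a. f a \<noteq> 0} \<and> (\<forall>a. f a \<in> gp \<inter> G a) \<and> v = (\<Sum>a\<in>{a. f a \<noteq> 0}. f a)"
      using decomp_inv[OF Plin Pdeg] unfolding gp_def by simp
  next
    fix y assume "y \<in> \<alpha> ` gp" then show "y \<in> gp" unfolding gp_def using Pax by auto
  next
    fix xs assume xs: "length xs = n \<and> set xs \<subseteq> gp"
    then have "xs!0 \<in> gp" using n0 by auto
    then have "P (br xs) = br xs" using slot[OF n0, of xs] xs unfolding gp_def by simp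
    then show "br xs \<in> gp" unfolding gp_def by simp
  qed
  have sa_gm: "graded_subalgebra scale G n br \<alpha> gm"
    unfolding graded_subalgebra_def
  proof (intro conjI ballI subsetI allI impI)
    show "V.subspace gm" by (rule sub_gm)
  next
    fix v assume "v \<in> gm"
    then have "- P v = v" unfolding gm_def by simp
    then show "\<exists>f. finite {a. f a \<noteq> 0} \<and> (\<forall>a. f a \<in> gm \<inter> G a) \<and> v = (\<Sum>a\<in>{a. f a \<noteq> 0}. f a)"
    proof -
      have eq: "{x. - P x = x} = gm" unfolding gm_def by (rule Collect_cong) (metis minus_minus)
      show ?thesis using decomp_inv[OF Nlin Ndeg \<open>- P v = v\<close>] unfolding eq .
    qed
  next
    fix y assume "y \<in> \<alpha> ` gm" then show "y \<in> gm" unfolding gm_def using Pax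
      by (auto simp: LA.neg)
  next
    fix xs assume xs: "length xs = n \<and> set xs \<subseteq> gm"
    then have "xs!0 \<in> gm" using n0 by auto
    then have "P (br xs) = br (xs[0 := - (xs!0)])" using slot[OF n0, of xs] xs unfolding gm_def by simp
    also have "\<dots> = - br xs" using br_neg[of xs 0 "xs!0"] xs n0 by simp
    finally show "br xs \<in> gm" unfolding gm_def by simp
  qed
  have nz_gp: "gp \<noteq> {0}"
  proof -
    obtain x where x: "P x \<noteq> - x" using Pneg by auto
    have "P (x + P x) = x + P x" by (simp add: L.add PPx add.commute)
    moreover have "x + P x \<noteq> 0" using x by (metis add.commute minus_unique)
    ultimately show ?thesis unfolding gp_def by blast
  qed
  have nz_gm: "gm \<noteq> {0}"
  proof -
    obtain x where x: "P x \<noteq> x" using Pid by (auto simp: fun_eq_iff)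
    have "P (x - P x) = - (x - P x)" by (simp add: L.diff PPx)
    moreover have "x - P x \<noteq> 0" using x by simp
    ultimately show ?thesis unfolding gm_def by blast
  qed
  have int: "gp \<inter> gm = {0}"
  proof
    show "gp \<inter> gm \<subseteq> {0}"
    proof
      fix x assume "x \<in> gp \<inter> gm"
      then have "x = - x" unfolding gp_def gm_def by force
      then have "x + x = x + - x" by (rule arg_cong)
      then have "x + x = 0" by simp
      from two_zero[OF this] show "x \<in> {0}" by simp
    qed
  qed (simp add: gp_def gm_def)
  have dec: "\<forall>v. \<exists>a\<in>gp. \<exists>b\<in>gm. v = a + b"
  proof
    fix v
    let ?a = "scale (1/2) (v + P v)" and ?b = "scale (1/2) (v - P v)"
    have "?a + ?b = scale (1/2) (v + v)" by (simp add: V.scale_right_distrib[symmetric])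
    then have "v = ?a + ?b" using half by simp
    moreover have "?a \<in> gp" unfolding gp_def by (simp add: L.add L.scale PPx add.commute)
    moreover have "?b \<in> gm" unfolding gm_def
      by (simp add: L.diff L.scale PPx V.scale_minus_right[symmetric])
    ultimately show "\<exists>a\<in>gp. \<exists>b\<in>gm. v = a + b" by blast
  qed
  have mix: "\<forall>i. 1 \<le> i \<and> i \<le> n - 1 \<longrightarrow>
                     (\<forall>as bs. length as = i \<and> set as \<subseteq> gp \<and> length bs = n - i \<and> set bs \<subseteq> gm
                        \<longrightarrow> br (as @ bs) = 0)"
  proof (intro allI impI)
    fix i as bs
    assume i: "1 \<le> i \<and> i \<le> n - 1"
      and h: "length as = i \<and> set as \<subseteq> gp \<and> length bs = n - i \<and> set bs \<subseteq> gm"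
    let ?xs = "as @ bs"
    have l: "length ?xs = n" using h i n0 by (simp; arith)
    have "?xs!0 = as!0" using h i by (simp add: nth_append)
    moreover have "as!0 \<in> gp" using h i by (metis One_nat_def Suc_le_eq nth_mem subsetD)
    ultimately have a0: "P (?xs!0) = ?xs!0" unfolding gp_def by simp
    have n1: "n - 1 < n" using n0 by simp
    have "?xs!(n-1) = bs!(n-1-i)" using h i by (simp add: nth_append)
    moreover have "bs!(n-1-i) \<in> gm"
    proof -
      have "n-1-i < length bs" using h i n0 by (simp; arith)
      then show ?thesis using h nth_mem by blast
    qed
    ultimately have a1: "P (?xs!(n-1)) = - (?xs!(n-1))" unfolding gm_def by simp
    have "br ?xs = P (br ?xs)"
    proof -
      have "P (br ?xs) = br (?xs[0 := P (?xs!0)])" by (rule slot[OF n0 l])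
      also have "\<dots> = br ?xs" by (simp only: a0 list_update_id)
      finally show ?thesis by simp
    qed
    also have "\<dots> = br (?xs[n-1 := - (?xs!(n-1))])" using slot[OF n1 l] a1 by simp
    also have "\<dots> = - br ?xs" using br_neg[OF l n1, of "?xs!(n-1)"] by simp
    finally have "br ?xs + br ?xs = br ?xs + - br ?xs" by (rule arg_cong)
    then have "br ?xs + br ?xs = 0" by simp
    then show "br ?xs = 0" by (rule two_zero)
  qed
  show ?thesis using sa_gp sa_gm nz_gp nz_gm int dec mix by blast
qed

end



context hlc begin

definition mu :: "bool list \<Rightarrow> nat" where
  "mu ts = (\<Sum>k<n. if ts!k then k else 0)"

lemma mu_swap:
  assumes j: "j + 1 < n" and lts: "length ts = n" and a: "\<not> ts!j" and b: "ts!(j+1)"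
  shows "mu (ts[j := ts!(j+1), j+1 := ts!j]) < mu ts"
proof -
  let ?ts = "ts[j := ts!(j+1), j+1 := ts!j]"
  let ?g = "\<lambda>k. if ts!k then k else 0" and ?h = "\<lambda>k. if ?ts!k then k else 0"
  let ?R = "{..<n} - {j} - {Suc j}"
  have fin: "finite {..<n}" "finite ({..<n} - {j})" by auto
  have m1: "j \<in> {..<n}" "Suc j \<in> {..<n} - {j}" using j by auto
  have eg: "sum ?g {..<n} = ?g j + (?g (Suc j) + sum ?g ?R)"
    using sum.remove[OF fin(1) m1(1), of ?g] sum.remove[OF fin(2) m1(2), of ?g] by simp
  have eh: "sum ?h {..<n} = ?h j + (?h (Suc j) + sum ?h ?R)"
    using sum.remove[OF fin(1) m1(1), of ?h] sum.remove[OF fin(2) m1(2), of ?h] by simp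
  have er: "sum ?h ?R = sum ?g ?R" by (rule sum.cong) auto
  have lt: "length ts > Suc j" using j lts by simp
  have "?g j = 0" "?g (Suc j) = Suc j" using a b by auto
  moreover have "?h j = j" "?h (Suc j) = 0" using a b lt by (auto simp: nth_list_update)
  ultimately show ?thesis unfolding mu_def using eg eh er by simp
qed

lemma hmixed:
  assumes mix: "\<forall>i. 1 \<le> i \<and> i \<le> n - 1 \<longrightarrow>
                     (\<forall>as bs. length as = i \<and> set as \<subseteq> gp \<and> length bs = n - i \<and> set bs \<subseteq> gm
                        \<longrightarrow> br (as @ bs) = 0)"
  shows "length ts = n \<Longrightarrow> True \<in> set ts \<Longrightarrow> False \<in> set ts \<Longrightarrow> length xs = n \<Longrightarrow> length ds = n \<Longrightarrow>
    \<forall>j<n. xs!j \<in> (if ts!j then gp else gm) \<and> xs!j \<in> G (ds!j) \<Longrightarrow> br xs = 0"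
proof -
  have main: "\<forall>ts xs ds. mu ts = m \<longrightarrow> length ts = n \<longrightarrow> True \<in> set ts \<longrightarrow> False \<in> set ts \<longrightarrow>
     length xs = n \<longrightarrow> length ds = n \<longrightarrow>
    (\<forall>j<n. xs!j \<in> (if ts!j then gp else gm) \<and> xs!j \<in> G (ds!j)) \<longrightarrow> br xs = 0" for m
  proof (induction m rule: less_induct)
    case (less m)
    show ?case
    proof (intro allI impI)
      fix ts xs ds
      assume mu: "mu ts = m" and lt: "length ts = n" and tr: "True \<in> set ts" and fa: "False \<in> set ts"
        and lx: "length xs = n" and ld: "length ds = n"
        and hx: "\<forall>j<n. xs!j \<in> (if ts!j then gp else gm) \<and> xs!j \<in> G (ds!j)"
      show "br xs = 0"
      proof (cases "\<exists>j. j + 1 < n \<and> \<not> ts!j \<and> ts!(j+1)")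
        case True
        then obtain j where j: "j + 1 < n" "\<not> ts!j" "ts!(j+1)" by blast
        let ?ts = "ts[j := ts!(j+1), j+1 := ts!j]"
        let ?xs = "xs[j := xs!(j+1), j+1 := xs!j]"
        let ?ds = "ds[j := ds!(j+1), j+1 := ds!j]"
        have "mu ?ts < m" using mu_swap[OF j(1) lt j(2) j(3)] mu by simp
        moreover have "length ?ts = n" "length ?xs = n" "length ?ds = n" using lt lx ld by auto
        moreover have "True \<in> set ?ts"
        proof -
          have "?ts ! j = True" using j lt by (simp add: nth_list_update)
          then show ?thesis using j lt by (metis Suc_eq_plus1 Suc_lessD length_list_update nth_mem)
        qed
        moreover have "False \<in> set ?ts"
        proof -
          have "?ts ! (j+1) = False" using j lt by (simp add: nth_list_update)
          then show ?thesis using j lt by (metis length_list_update nth_mem)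
        qed
        moreover have "\<forall>k<n. ?xs!k \<in> (if ?ts!k then gp else gm) \<and> ?xs!k \<in> G (?ds!k)"
        proof (intro allI impI)
          fix k assume k: "k < n"
          have hj: "xs!j \<in> gm \<and> xs!j \<in> G (ds!j)" using hx j by (metis Suc_eq_plus1 Suc_lessD)
          have hj1: "xs!(j+1) \<in> gp \<and> xs!(j+1) \<in> G (ds!(j+1))" using hx j by metis
          show "?xs!k \<in> (if ?ts!k then gp else gm) \<and> ?xs!k \<in> G (?ds!k)"
          proof (cases "k = j")
            case True then show ?thesis using hj1 j lt lx ld by (simp add: nth_list_update)
          next
            case False
            show ?thesis
            proof (cases "k = j + 1")
              case True then show ?thesis using hj j lt lx ld by (simp add: nth_list_update)
            next
              case False2: False
              then show ?thesis using False hx k lt lx ld by (simp add: nth_list_update)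
            qed
          qed
        qed
        ultimately have "br ?xs = 0" using less.IH by blast
        then show ?thesis using skew[of xs ds j] lx ld hx j(1) by simp
      next
        case False
        have ex: "\<exists>k. k < n \<and> \<not> ts!k" using fa lt by (metis in_set_conv_nth)
        define i where "i = (LEAST k. k < n \<and> \<not> ts!k)"
        have i1: "i < n \<and> \<not> ts!i" unfolding i_def by (rule LeastI_ex[OF ex])
        have i2: "\<forall>k<i. ts!k"
        proof (intro allI impI)
          fix k assume k: "k < i"
          then have "\<not> (k < n \<and> \<not> ts!k)" unfolding i_def by (rule not_less_Least)
          then show "ts!k" using k i1 by simp
        qed
        have i3: "i + d < n \<longrightarrow> \<not> ts!(i+d)" for d
        proof (induction d)
          case 0 then show ?case using i1 by simp
        next
          case (Suc d)
          then show ?case using False by auto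
        qed
        have ipos: "1 \<le> i"
        proof (rule ccontr)
          assume "\<not> 1 \<le> i"
          then have "i = 0" by simp
          obtain k where "k < n" "ts!k" using tr lt by (metis in_set_conv_nth)
          then show False using i3[of k] \<open>i = 0\<close> by simp
        qed
        let ?as = "take i xs" and ?bs = "drop i xs"
        have "length ?as = i" "length ?bs = n - i" using lx i1 by auto
        moreover have "set ?as \<subseteq> gp"
        proof
          fix x assume "x \<in> set ?as"
          then obtain k where k: "k < length ?as" "x = ?as!k" by (metis in_set_conv_nth)
          then have "k < i" "x = xs!k" using lx i1 by auto
          then have "k < n" "ts!k" using i2 i1 by auto
          then show "x \<in> gp" using hx \<open>x = xs!k\<close> by metis
        qed
        moreover have "set ?bs \<subseteq> gm"
        proof
          fix x assume "x \<in> set ?bs"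
          then obtain k where k: "k < length ?bs" "x = ?bs!k" by (metis in_set_conv_nth)
          then have "i + k < n" "x = xs!(i+k)" using lx i1 by auto
          then have "\<not> ts!(i+k)" using i3[of k] by simp
          then show "x \<in> gm" using hx \<open>x = xs!(i+k)\<close> \<open>i + k < n\<close> by metis
        qed
        moreover have "1 \<le> i \<and> i \<le> n - 1" using ipos i1 by (simp; arith)
        ultimately have "br (?as @ ?bs) = 0" using mix by blast
        then show ?thesis by simp
      qed
    qed
  qed
  show "length ts = n \<Longrightarrow> True \<in> set ts \<Longrightarrow> False \<in> set ts \<Longrightarrow> length xs = n \<Longrightarrow> length ds = n \<Longrightarrow>
    \<forall>j<n. xs!j \<in> (if ts!j then gp else gm) \<and> xs!j \<in> G (ds!j) \<Longrightarrow> br xs = 0"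
    using main by blast
qed

end



context hlc begin

lemma mixed:
  assumes decp: "\<forall>v\<in>gp. \<exists>f. finite {a. f a \<noteq> 0} \<and> (\<forall>a. f a \<in> gp \<inter> G a) \<and> v = (\<Sum>a\<in>{a. f a \<noteq> 0}. f a)"
    and decm: "\<forall>v\<in>gm. \<exists>f. finite {a. f a \<noteq> 0} \<and> (\<forall>a. f a \<in> gm \<inter> G a) \<and> v = (\<Sum>a\<in>{a. f a \<noteq> 0}. f a)"
    and mix: "\<forall>i. 1 \<le> i \<and> i \<le> n - 1 \<longrightarrow>
                     (\<forall>as bs. length as = i \<and> set as \<subseteq> gp \<and> length bs = n - i \<and> set bs \<subseteq> gm
                        \<longrightarrow> br (as @ bs) = 0)"
    and xs: "length xs = n" "\<forall>j<n. xs!j \<in> gp \<union> gm" "\<exists>j<n. xs!j \<notin> gp" "\<exists>j<n. xs!j \<notin> gm"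
  shows "br xs = 0"
proof -
  define ts where "ts = map (\<lambda>x. x \<in> gp) xs"
  have lts: "length ts = n" unfolding ts_def using xs by simp
  have tsj: "\<And>j. j < n \<Longrightarrow> ts!j = (xs!j \<in> gp)" unfolding ts_def using xs by simp
  have tr: "True \<in> set ts"
  proof -
    obtain j where j: "j < n" "xs!j \<notin> gm" using xs by blast
    then have "ts!j = True" using xs tsj by auto
    then show ?thesis using j lts by (metis nth_mem)
  qed
  have fa: "False \<in> set ts"
  proof -
    obtain j where j: "j < n" "xs!j \<notin> gp" using xs by blast
    then have "ts!j = False" using xs tsj by auto
    then show ?thesis using j lts by (metis nth_mem)
  qed
  show ?thesis
  proof (rule multi_ext[where F = br and n = n and R = "\<lambda>j v. v \<in> (if ts!j then gp else gm)"
        and Q = "\<lambda>j v. v \<in> (if ts!j then gp else gm) \<and> (\<exists>d. v \<in> G d)" and 'i = 'g])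
    fix xs :: "'v list" and i x y assume "length xs = n" "i < n"
    then show "br (xs[i:=x+y]) = br (xs[i:=x]) + br (xs[i:=y])" by (rule br_add)
  next
    fix k v assume k: "k < n" and v: "v \<in> (if ts!k then gp else gm)"
    obtain f where f: "finite {a. f a \<noteq> 0}" "\<forall>a. f a \<in> (if ts!k then gp else gm) \<inter> G a" "v = (\<Sum>a\<in>{a. f a \<noteq> 0}. f a)"
    proof (cases "ts!k")
      case True then show ?thesis using that decp v by auto
    next
      case False then show ?thesis using that decm v by auto
    qed
    show "\<exists>S f. finite S \<and> (\<forall>s\<in>S. f s \<in> (if ts!k then gp else gm) \<and> (\<exists>d. f s \<in> G d)) \<and> v = sum f (S::'g set)"
      by (rule exI[of _ "{a. f a \<noteq> 0}"], rule exI[of _ f]) (use f in blast)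
  next
    fix ys :: "'v list" assume l: "length ys = n" and q: "\<forall>j<n. ys!j \<in> (if ts!j then gp else gm) \<and> (\<exists>d. ys!j \<in> G d)"
    define ds where "ds = map (\<lambda>i. SOME d. ys!i \<in> G d) [0..<n]"
    have "\<forall>i<n. ys!i \<in> (if ts!i then gp else gm) \<and> ys!i \<in> G (ds!i)"
    proof (intro allI impI)
      fix i assume i: "i < n"
      have "ds!i = (SOME d. ys!i \<in> G d)" unfolding ds_def using i by simp
      moreover have "\<exists>d. ys!i \<in> G d" using q i by blast
      ultimately have "ys!i \<in> G (ds!i)" using someI_ex by metis
      then show "ys!i \<in> (if ts!i then gp else gm) \<and> ys!i \<in> G (ds!i)" using q i by blast
    qed
    moreover have "length ds = n" unfolding ds_def by simp
    ultimately show "br ys = 0" using hmixed[OF mix lts tr fa l] by blast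
  next
    show "length xs = n" by (rule xs(1))
  next
    show "\<forall>j<n. xs!j \<in> (if ts!j then gp else gm)" using xs(2) tsj by auto
  qed
qed

end



context hlc begin

lemma conv:
  assumes sgp: "graded_subalgebra scale G n br \<alpha> gp" and sgm: "graded_subalgebra scale G n br \<alpha> gm"
    and nzp: "gp \<noteq> {0}" and nzm: "gm \<noteq> {0}" and int: "gp \<inter> gm = {0}"
    and dec: "\<forall>v. \<exists>a\<in>gp. \<exists>b\<in>gm. v = a + b"
    and mix: "\<forall>i. 1 \<le> i \<and> i \<le> n - 1 \<longrightarrow>
                     (\<forall>as bs. length as = i \<and> set as \<subseteq> gp \<and> length bs = n - i \<and> set bs \<subseteq> gm
                        \<longrightarrow> br (as @ bs) = 0)"
  shows "\<exists>P. strict_product_structure scale G n br \<alpha> P"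
proof -
  have sub_p: "V.subspace gp" and decp: "\<forall>v\<in>gp. \<exists>f. finite {a. f a \<noteq> 0} \<and> (\<forall>a. f a \<in> gp \<inter> G a) \<and> v = (\<Sum>a\<in>{a. f a \<noteq> 0}. f a)"
    and alp: "\<alpha> ` gp \<subseteq> gp" and brp: "\<forall>xs. length xs = n \<and> set xs \<subseteq> gp \<longrightarrow> br xs \<in> gp"
    using sgp unfolding graded_subalgebra_def by blast+
  have sub_m: "V.subspace gm" and decm: "\<forall>v\<in>gm. \<exists>f. finite {a. f a \<noteq> 0} \<and> (\<forall>a. f a \<in> gm \<inter> G a) \<and> v = (\<Sum>a\<in>{a. f a \<noteq> 0}. f a)"
    and alm: "\<alpha> ` gm \<subseteq> gm" and brm: "\<forall>xs. length xs = n \<and> set xs \<subseteq> gm \<longrightarrow> br xs \<in> gm"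
    using sgm unfolding graded_subalgebra_def by blast+
  interpret LA: Vector_Spaces.linear scale scale \<alpha> by (rule alpha_lin)
  define pr where "pr v = (SOME a. a \<in> gp \<and> v - a \<in> gm)" for v
  define P where "P v = pr v - (v - pr v)" for v
  have key: "P (a + b) = a - b" if a: "a \<in> gp" and b: "b \<in> gm" for a b
  proof -
    have "\<exists>a'. a' \<in> gp \<and> (a + b) - a' \<in> gm" using a b by (intro exI[of _ a]) simp
    then have c: "pr (a+b) \<in> gp \<and> (a + b) - pr (a+b) \<in> gm" unfolding pr_def by (rule someI_ex)
    have "a - pr (a+b) \<in> gp" using c a sub_p V.subspace_diff by blast
    moreover have "a - pr (a+b) = ((a + b) - pr (a+b)) - b" by simp
    then have "a - pr (a+b) \<in> gm" using c b sub_m V.subspace_diff by metis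
    ultimately have "a - pr (a+b) \<in> {0}" using int by blast
    then have "pr (a+b) = a" by simp
    then show ?thesis unfolding P_def by simp
  qed
  have Pp: "P a = a" if "a \<in> gp" for a using key[OF that V.subspace_0[OF sub_m]] by simp
  have Pm: "P b = - b" if "b \<in> gm" for b using key[OF V.subspace_0[OF sub_p] that] by simp
  have Plin: "Vector_Spaces.linear scale scale P"
    unfolding Vector_Spaces.linear_iff
  proof (intro conjI allI)
    show "vector_space scale" by (rule VS)
    show "vector_space scale" by (rule VS)
  next
    fix x y
    obtain a b where ab: "a \<in> gp" "b \<in> gm" "x = a + b" using dec by blast
    obtain c d where cd: "c \<in> gp" "d \<in> gm" "y = c + d" using dec by blast
    have "x + y = (a + c) + (b + d)" using ab cd by (simp add: algebra_simps)
    moreover have "a + c \<in> gp" "b + d \<in> gm" using ab cd sub_p sub_m V.subspace_add by blast+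
    ultimately have h1: "P (x + y) = (a + c) - (b + d)" using key by simp
    have hx: "P x = a - b" and hy: "P y = c - d" using key ab cd by simp_all
    have "(a + c) - (b + d) = (a - b) + (c - d)" by (simp add: algebra_simps)
    then show "P (x + y) = P x + P y" by (simp only: h1 hx hy)
  next
    fix c x
    obtain a b where ab: "a \<in> gp" "b \<in> gm" "x = a + b" using dec by blast
    have "scale c x = scale c a + scale c b" using ab by (simp add: V.scale_right_distrib)
    moreover have "scale c a \<in> gp" "scale c b \<in> gm" using ab sub_p sub_m V.subspace_scale by blast+
    ultimately have h1: "P (scale c x) = scale c a - scale c b" using key by simp
    have hx: "P x = a - b" using key ab by simp
    have "scale c a - scale c b = scale c (a - b)" by (simp add: V.scale_right_diff_distrib)
    then show "P (scale c x) = scale c (P x)" by (simp only: h1 hx)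
  qed
  interpret L: Vector_Spaces.linear scale scale P by (rule Plin)
  have Pdeg: "\<forall>\<gamma>. P ` G \<gamma> \<subseteq> G \<gamma>"
  proof (intro allI subsetI)
    fix \<gamma> y assume "y \<in> P ` G \<gamma>"
    then obtain v where v: "v \<in> G \<gamma>" "y = P v" by blast
    obtain a b where ab: "a \<in> gp" "b \<in> gm" "v = a + b" using dec by blast
    obtain fa where fa: "finite {c. fa c \<noteq> 0}" "\<forall>c. fa c \<in> gp \<inter> G c" "a = (\<Sum>c\<in>{c. fa c \<noteq> 0}. fa c)"
      using decp ab by blast
    obtain fb where fb: "finite {c. fb c \<noteq> 0}" "\<forall>c. fb c \<in> gm \<inter> G c" "b = (\<Sum>c\<in>{c. fb c \<noteq> 0}. fb c)"
      using decm ab by blast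
    let ?U = "{c. fa c \<noteq> 0} \<union> {c. fb c \<noteq> 0}"
    let ?h = "\<lambda>c. fa c + fb c"
    let ?d = "\<lambda>c. if c = \<gamma> then v else 0"
    have fU: "finite ?U" using fa fb by simp
    have sh: "{c. ?h c \<noteq> 0} \<subseteq> ?U" by auto
    have fh: "finite {c. ?h c \<noteq> 0}" using finite_subset[OF sh fU] .
    have hG: "\<forall>c. ?h c \<in> G c" using fa(2) fb(2) GS V.subspace_add by blast
    have "(\<Sum>c\<in>{c. ?h c \<noteq> 0}. ?h c) = (\<Sum>c\<in>?U. ?h c)" by (rule supp_sum[OF fU sh])
    also have "\<dots> = (\<Sum>c\<in>?U. fa c) + (\<Sum>c\<in>?U. fb c)" by (simp add: sum.distrib)
    also have "(\<Sum>c\<in>?U. fa c) = a" unfolding fa(3) by (rule supp_sum[symmetric]) (use fU in auto)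
    also have "(\<Sum>c\<in>?U. fb c) = b" unfolding fb(3) by (rule supp_sum[symmetric]) (use fU in auto)
    finally have sumh: "(\<Sum>c\<in>{c. ?h c \<noteq> 0}. ?h c) = v" using ab by simp
    have sd: "{c. ?d c \<noteq> 0} \<subseteq> {\<gamma>}" by auto
    have fd: "finite {c. ?d c \<noteq> 0}" using finite_subset[OF sd] by simp
    have dG: "\<forall>c. ?d c \<in> G c" using v GS V.subspace_0 by simp
    have "(\<Sum>c\<in>{c. ?d c \<noteq> 0}. ?d c) = (\<Sum>c\<in>{\<gamma>}. ?d c)" by (rule supp_sum[OF _ sd]) simp
    then have sumd: "(\<Sum>c\<in>{c. ?d c \<noteq> 0}. ?d c) = v" by simp
    have hd: "?h c = ?d c" for c using uniq[OF fh fd hG dG] sumh sumd by simp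
    have z: "fa c = 0 \<and> fb c = 0" if "c \<noteq> \<gamma>" for c
    proof -
      have "fa c + fb c = 0" using hd[of c] that by simp
      then have "fa c = - fb c" by (simp add: eq_neg_iff_add_eq_0)
      moreover have "fb c \<in> gm" using fb(2) by blast
      ultimately have "fa c \<in> gm" using sub_m V.subspace_neg by simp
      then have "fa c = 0" using fa(2) int by blast
      then show ?thesis using \<open>fa c + fb c = 0\<close> by simp
    qed
    have "a = (\<Sum>c\<in>{\<gamma>}. fa c)" unfolding fa(3) by (rule supp_sum) (use z in auto)
    then have aG: "a \<in> G \<gamma>" using fa(2) by simp
    have "b = (\<Sum>c\<in>{\<gamma>}. fb c)" unfolding fb(3) by (rule supp_sum) (use z in auto)
    then have bG: "b \<in> G \<gamma>" using fb(2) by simp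
    have "y = a - b" using v ab key by simp
    then show "y \<in> G \<gamma>" using aG bG GS V.subspace_diff by blast
  qed
  have Pid: "P \<noteq> id"
  proof
    assume h: "P = id"
    obtain b where b: "b \<in> gm" "b \<noteq> 0" using nzm V.subspace_0[OF sub_m] by blast
    have "b = - b" using Pm[OF b(1)] h by simp
    then have "b + b = b + - b" by (rule arg_cong)
    then have "b + b = 0" by simp
    then show False using two_zero b(2) by blast
  qed
  have Pneg: "P \<noteq> (\<lambda>x. - x)"
  proof
    assume h: "P = (\<lambda>x. - x)"
    obtain a where a: "a \<in> gp" "a \<noteq> 0" using nzp V.subspace_0[OF sub_p] by blast
    have "a = - a" using Pp[OF a(1)] h by metis
    then have "a + a = a + - a" by (rule arg_cong)
    then have "a + a = 0" by simp
    then show False using two_zero a(2) by blast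
  qed
  have PP: "P \<circ> P = id"
  proof
    fix v
    obtain a b where ab: "a \<in> gp" "b \<in> gm" "v = a + b" using dec by blast
    have "- b \<in> gm" using ab sub_m V.subspace_neg by blast
    then have "P (a + - b) = a - - b" using key ab by blast
    then show "(P \<circ> P) v = id v" using key ab by simp
  qed
  have Pa: "P \<circ> \<alpha> = \<alpha> \<circ> P"
  proof
    fix v
    obtain a b where ab: "a \<in> gp" "b \<in> gm" "v = a + b" using dec by blast
    have "\<alpha> a \<in> gp" "\<alpha> b \<in> gm" using ab alp alm by blast+
    then have "P (\<alpha> a + \<alpha> b) = \<alpha> a - \<alpha> b" using key by blast
    then show "(P \<circ> \<alpha>) v = (\<alpha> \<circ> P) v" using key ab by (simp add: LA.add LA.diff)
  qed
  have n0: "0 < n" using n2 by simp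
  have cen: "\<forall>xs. length xs = n \<longrightarrow> P (br xs) = br (xs[0 := P (xs ! 0)])"
  proof (intro allI impI)
    fix xs :: "'v list" assume xs: "length xs = n"
    let ?F = "\<lambda>xs. P (br xs) - br (xs[0 := P (xs!0)])"
    have "?F xs = 0"
    proof (rule multi_ext[where F = ?F and n = n and R = "\<lambda>_ _. True" and Q = "\<lambda>_ v. v \<in> gp \<union> gm" and 'i = bool])
      fix xs :: "'v list" and i x y assume l: "length xs = n" and i: "i < n"
      show "?F (xs[i:=x+y]) = ?F (xs[i:=x]) + ?F (xs[i:=y])"
      proof (cases "i = 0")
        case True
        then show ?thesis using l i br_add[of xs 0] br_add[of xs 0 "P x" "P y"]
          by (simp add: L.add algebra_simps)
      next
        case False
        have e: "\<And>z. xs[i := z, 0 := P (xs ! 0)] = xs[0 := P (xs ! 0), i := z]"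
          using False by (simp add: list_update_swap)
        show ?thesis using False l i br_add[of "xs[0 := P (xs ! 0)]" i x y] br_add[of xs i x y]
          by (simp add: e L.add algebra_simps)
      qed
    next
      fix k v
      obtain a b where ab: "a \<in> gp" "b \<in> gm" "v = a + b" using dec by blast
      show "\<exists>S f. finite S \<and> (\<forall>s\<in>S. f s \<in> gp \<union> gm) \<and> v = sum f (S::bool set)"
        by (rule exI[of _ UNIV], rule exI[of _ "\<lambda>t. if t then a else b"]) (use ab in \<open>auto simp: UNIV_bool add.commute\<close>)
    next
      fix ys :: "'v list" assume l: "length ys = n" and q: "\<forall>j<n. ys!j \<in> gp \<union> gm"
      show "?F ys = 0"
      proof (cases "\<forall>j<n. ys!j \<in> gp")
        case True
        then have "set ys \<subseteq> gp" using l by (metis in_set_conv_nth subsetI)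
        then have "br ys \<in> gp" using brp l by blast
        moreover have "P (ys!0) = ys!0" using True n0 Pp by blast
        ultimately show ?thesis using Pp by simp
      next
        case F1: False
        show ?thesis
        proof (cases "\<forall>j<n. ys!j \<in> gm")
          case True
          then have "set ys \<subseteq> gm" using l by (metis in_set_conv_nth subsetI)
          then have "br ys \<in> gm" using brm l by blast
          moreover have "P (ys!0) = - (ys!0)" using True n0 Pm by blast
          ultimately show ?thesis using Pm br_neg[OF l n0, of "ys!0"] by simp
        next
          case F2: False
          have b1: "br ys = 0" using mixed[OF decp decm mix l q] F1 F2 by blast
          let ?zs = "ys[0 := P (ys!0)]"
          have st: "(?zs!j \<in> gp) = (ys!j \<in> gp) \<and> (?zs!j \<in> gm) = (ys!j \<in> gm)" if j: "j < n" for j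
          proof (cases "j = 0")
            case False then show ?thesis by simp
          next
            case True
            show ?thesis
            proof (cases "ys!0 \<in> gp")
              case True then show ?thesis using \<open>j = 0\<close> l n0 Pp by simp
            next
              case False
              then have m: "ys!0 \<in> gm" using q n0 by blast
              have "?zs!0 = - (ys!0)" using l n0 Pm[OF m] by simp
              moreover have "- (ys!0) \<notin> gp" using False sub_p V.subspace_neg by fastforce
              moreover have "- (ys!0) \<in> gm" using m sub_m V.subspace_neg by blast
              ultimately show ?thesis using \<open>j = 0\<close> False m by simp
            qed
          qed
          have lz: "length ?zs = n" using l by simp
          have qz: "\<forall>j<n. ?zs!j \<in> gp \<union> gm" using q st by blast
          have "br ?zs = 0" using mixed[OF decp decm mix lz qz] F1 F2 st by blast
          then show ?thesis using b1 by simp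
        qed
      qed
    qed (use xs in auto)
    then show "P (br xs) = br (xs[0 := P (xs ! 0)])" by simp
  qed
  have "strict_product_structure scale G n br \<alpha> P"
    unfolding strict_product_structure_def almost_product_structure_def centroid_def deg0_linear_def
    using Plin Pdeg Pid Pneg PP Pa cen by blast
  then show ?thesis by blast
qed

end


theorem proposition6p11:
  fixes scale :: "'k::field_char_0 \<Rightarrow> 'v::ab_group_add \<Rightarrow> 'v"
    and G :: "'g::ab_group_add \<Rightarrow> 'v set"
    and n :: nat
    and br :: "'v list \<Rightarrow> 'v"
    and eps :: "'g \<Rightarrow> 'g \<Rightarrow> 'k"
    and \<alpha> :: "'v \<Rightarrow> 'v"
  assumes "n \<ge> 2"
    and "n_Hom_Lie_color_algebra scale G n br eps \<alpha>"
  shows "(\<exists>P. strict_product_structure scale G n br \<alpha> P) \<longleftrightarrow>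
         (\<exists>gp gm. graded_subalgebra scale G n br \<alpha> gp \<and> graded_subalgebra scale G n br \<alpha> gm \<and>
                  gp \<noteq> {0} \<and> gm \<noteq> {0} \<and>
                  gp \<inter> gm = {0} \<and> (\<forall>v. \<exists>a\<in>gp. \<exists>b\<in>gm. v = a + b) \<and>
                  (\<forall>i. 1 \<le> i \<and> i \<le> n - 1 \<longrightarrow>
                     (\<forall>as bs. length as = i \<and> set as \<subseteq> gp \<and> length bs = n - i \<and> set bs \<subseteq> gm
                        \<longrightarrow> br (as @ bs) = 0)))"
proof -
  interpret hlc scale G n br eps \<alpha> using assms by unfold_locales
  show ?thesis
  proof
    assume "\<exists>P. strict_product_structure scale G n br \<alpha> P"
    then obtain P where "strict_product_structure scale G n br \<alpha> P" by blast
    then show "\<exists>gp gm. graded_subalgebra scale G n br \<alpha> gp \<and> graded_subalgebra scale G n br \<alpha> gm \<and>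
                  gp \<noteq> {0} \<and> gm \<noteq> {0} \<and>
                  gp \<inter> gm = {0} \<and> (\<forall>v. \<exists>a\<in>gp. \<exists>b\<in>gm. v = a + b) \<and>
                  (\<forall>i. 1 \<le> i \<and> i \<le> n - 1 \<longrightarrow>
                     (\<forall>as bs. length as = i \<and> set as \<subseteq> gp \<and> length bs = n - i \<and> set bs \<subseteq> gm
                        \<longrightarrow> br (as @ bs) = 0))" by (rule fwd)
  next
    assume "\<exists>gp gm. graded_subalgebra scale G n br \<alpha> gp \<and> graded_subalgebra scale G n br \<alpha> gm \<and>
                  gp \<noteq> {0} \<and> gm \<noteq> {0} \<and>
                  gp \<inter> gm = {0} \<and> (\<forall>v. \<exists>a\<in>gp. \<exists>b\<in>gm. v = a + b) \<and>
                  (\<forall>i. 1 \<le> i \<and> i \<le> n - 1 \<longrightarrow>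
                     (\<forall>as bs. length as = i \<and> set as \<subseteq> gp \<and> length bs = n - i \<and> set bs \<subseteq> gm
                        \<longrightarrow> br (as @ bs) = 0))"
    then obtain gp gm where h: "graded_subalgebra scale G n br \<alpha> gp" "graded_subalgebra scale G n br \<alpha> gm"
      "gp \<noteq> {0}" "gm \<noteq> {0}" "gp \<inter> gm = {0}" "\<forall>v. \<exists>a\<in>gp. \<exists>b\<in>gm. v = a + b"
      "\<forall>i. 1 \<le> i \<and> i \<le> n - 1 \<longrightarrow>
                     (\<forall>as bs. length as = i \<and> set as \<subseteq> gp \<and> length bs = n - i \<and> set bs \<subseteq> gm
                        \<longrightarrow> br (as @ bs) = 0)" by blast
    show "\<exists>P. strict_product_structure scale G n br \<alpha> P" by (rule conv[OF h])
  qed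
qed

end
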